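(* Let $n\ge4$, $\mu_1,\mu_2,\beta>0$, $p=2q+1$ with $\frac{n}{n-2}<p<\frac{n+2}{n-2}$, and let $(w_1,w_2)$ be a nonnegative $C^2$ solution on $\mathbb{R}$ of $$w_1''+\tau w_1'-\sigma w_1+\mu_1w_1^{2q+1}+\beta w_1^qw_2^{q+1}=0,\qquad w_2''+\tau w_2'-\sigma w_2+\mu_2w_2^{2q+1}+\beta w_2^qw_1^{q+1}=0.$$ If $\liminf_{t\to+\infty}w_1(t)=\liminf_{t\to+\infty}w_2(t)=0$, then $\liminf_{t\to+\infty}(w_1+w_2)(t)=0$.
   Context: $\tau=\frac4{p-1}-n+2$, $\sigma=\frac2{p-1}\big(n-2-\frac2{p-1}\big)$; both are positive in the stated range of $p$. *)

theory Defs
  imports "HOL-Analysis.Analysis"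
begin

definition C2_real :: "(real \<Rightarrow> real) \<Rightarrow> bool" where
  "C2_real f \<longleftrightarrow> (\<forall>t. f differentiable (at t)) \<and> (\<forall>t. deriv f differentiable (at t))
      \<and> continuous_on UNIV (deriv (deriv f))"

definition tau_c :: "nat \<Rightarrow> real \<Rightarrow> real" where
  "tau_c n p = 4 / (p - 1) - real n + 2"

definition sigma_c :: "nat \<Rightarrow> real \<Rightarrow> real" where
  "sigma_c n p = 2 / (p - 1) * (real n - 2 - 2 / (p - 1))"

end

theory Submission
  imports Defs "HOL-Analysis.Analysis"
begin

lemma last_above:
  fixes f :: "real \<Rightarrow> real"
  assumes "continuous_on {a..s} f" "a \<le> s" "f a \<ge> \<eta>" "f s < \<eta>"
  shows "\<exists>a'. a \<le> a' \<and> a' < s \<and> f a' \<ge> \<eta> \<and> (\<forall>t. a' < t \<and> t \<le> s \<longrightarrow> f t < \<eta>)"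
proof -
  let ?S = "{a..s} \<inter> f -` {\<eta>..}"
  have "closed ?S" by (rule continuous_closed_preimage) (use assms in auto)
  hence "compact ?S" using compact_Int_closed[of "{a..s}" "{a..s} \<inter> f -` {\<eta>..}"] by auto
  moreover have "a \<in> ?S" using assms by auto
  ultimately obtain m where m: "m \<in> ?S" "\<forall>t\<in>?S. t \<le> m" using compact_attains_sup by blast
  have "m \<noteq> s" using m assms by auto
  moreover have "\<forall>t. m < t \<and> t \<le> s \<longrightarrow> f t < \<eta>"
    using m by (auto simp: not_less[symmetric])
  ultimately show ?thesis using m by (intro exI[of _ m]) auto
qed

lemma first_above:
  fixes f :: "real \<Rightarrow> real"
  assumes "continuous_on {s..b} f" "s \<le> b" "f b \<ge> \<eta>" "f s < \<eta>"
  shows "\<exists>b'. s < b' \<and> b' \<le> b \<and> f b' \<ge> \<eta> \<and> (\<forall>t. s \<le> t \<and> t < b' \<longrightarrow> f t < \<eta>)"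
proof -
  let ?S = "{s..b} \<inter> f -` {\<eta>..}"
  have "closed ?S" by (rule continuous_closed_preimage) (use assms in auto)
  hence "compact ?S" using compact_Int_closed[of "{s..b}" "{s..b} \<inter> f -` {\<eta>..}"] by auto
  moreover have "b \<in> ?S" using assms by auto
  ultimately obtain m where m: "m \<in> ?S" "\<forall>t\<in>?S. m \<le> t" using compact_attains_inf by blast
  have "m \<noteq> s" using m assms by auto
  moreover have "\<forall>t. s \<le> t \<and> t < m \<longrightarrow> f t < \<eta>"
    using m by (auto simp: not_less[symmetric])
  ultimately show ?thesis using m by (intro exI[of _ m]) auto
qed

lemma key:
  fixes \<sigma> \<mu> \<beta> c q x y K D :: real
  assumes "0<q" "q<1" "\<mu>\<ge>0" "\<beta>>0" "c>0" "0 \<le> x" "x \<le> D" "D>0" "c \<le> y" "K>0" "\<sigma> \<le> K"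
    "D powr (1-q) \<le> \<beta> * c powr (q+1) / K"
  shows "\<sigma>*x - \<mu> * x powr (2*q+1) - \<beta> * x powr q * y powr (q+1) \<le> 0"
proof (cases "x = 0")
  case True thus ?thesis by simp
next
  case False
  hence xp: "x > 0" using assms by auto
  have "\<sigma>*x \<le> K*x" using assms by (simp add: mult_right_mono)
  also have "K*x = K*(x powr q * x powr (1-q))" using xp by (simp add: powr_add[symmetric])
  also have "x powr (1-q) \<le> D powr (1-q)" using assms by (intro powr_mono2) auto
  hence "K * (x powr q * x powr (1-q)) \<le> K * (x powr q * D powr (1-q))"
    using assms by (intro mult_left_mono) auto
  also have "\<dots> \<le> K * (x powr q * (\<beta> * c powr (q+1) / K))"
    using assms by (intro mult_left_mono) auto
  also have "\<dots> = \<beta> * x powr q * c powr (q+1)" using assms by simp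
  also have "\<dots> \<le> \<beta> * x powr q * y powr (q+1)"
    using assms by (intro mult_left_mono powr_mono2) auto
  finally have "\<sigma>*x \<le> \<beta> * x powr q * y powr (q+1)" .
  moreover have "\<mu> * x powr (2*q+1) \<ge> 0" using assms by simp
  ultimately show ?thesis by linarith
qed


theorem lemma4p3:
  fixes n :: nat and \<mu>1 \<mu>2 \<beta> q p :: real and w1 w2 :: "real \<Rightarrow> real"
  assumes "n \<ge> 4"
    and "\<mu>1 > 0" and "\<mu>2 > 0" and "\<beta> > 0"
    and "p = 2 * q + 1"
    and "real n / (real n - 2) < p" and "p < (real n + 2) / (real n - 2)"
    and "\<forall>t. w1 t \<ge> 0" and "\<forall>t. w2 t \<ge> 0"
    and "C2_real w1" and "C2_real w2"
    and "\<forall>t. deriv (deriv w1) t + tau_c n p * deriv w1 t - sigma_c n p * w1 t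
              + \<mu>1 * w1 t powr (2 * q + 1) + \<beta> * w1 t powr q * w2 t powr (q + 1) = 0"
    and "\<forall>t. deriv (deriv w2) t + tau_c n p * deriv w2 t - sigma_c n p * w2 t
              + \<mu>2 * w2 t powr (2 * q + 1) + \<beta> * w2 t powr q * w1 t powr (q + 1) = 0"
    and "Liminf at_top (\<lambda>t. ereal (w1 t)) = 0"
    and "Liminf at_top (\<lambda>t. ereal (w2 t)) = 0"
  shows "Liminf at_top (\<lambda>t. ereal (w1 t + w2 t)) = 0"
proof (rule ccontr)
  assume ne: "Liminf at_top (\<lambda>t. ereal (w1 t + w2 t)) \<noteq> 0"
  define \<sigma> where "\<sigma> = sigma_c n p"
  define \<tau> where "\<tau> = tau_c n p"
  have n4: "real n \<ge> 4" using assms(1) by simp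
  have p1: "p > 1"
  proof -
    have "real n / (real n - 2) > 1" using n4 by (simp add: field_simps)
    thus ?thesis using assms(6) by linarith
  qed
  have p3: "p < 3"
  proof -
    have "(real n + 2) / (real n - 2) \<le> 3" using n4 by (simp add: field_simps)
    thus ?thesis using assms(7) by linarith
  qed
  have q0: "q > 0" and q1: "q < 1" using p1 p3 assms(5) by auto
  have ge0: "0 \<le> Liminf at_top (\<lambda>t. ereal (w1 t + w2 t))"
    by (rule Liminf_bounded) (use assms(8,9) in auto)
  hence "0 < Liminf at_top (\<lambda>t. ereal (w1 t + w2 t))" using ne by auto
  then obtain r where r: "0 < ereal r" "ereal r < Liminf at_top (\<lambda>t. ereal (w1 t + w2 t))"
    using ereal_dense2 by blast
  define c where "c = r / 2"
  have c0: "c > 0" using r(1) c_def by simp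
  have "\<forall>\<^sub>F t in at_top. ereal r < ereal (w1 t + w2 t)" using less_LiminfD[OF r(2)] .
  then obtain T0 where T0: "\<And>t. t \<ge> T0 \<Longrightarrow> w1 t + w2 t > 2 * c"
    unfolding eventually_at_top_linorder c_def by auto
  define K where "K = max \<sigma> 1"
  have K0: "K > 0" and sK: "\<sigma> \<le> K" unfolding K_def by auto
  define D where "D = (\<beta> * c powr (q+1) / K) powr (1/(1-q))"
  have D0: "D > 0" unfolding D_def using assms(4) c0 K0 by simp
  have Dp: "D powr (1-q) \<le> \<beta> * c powr (q+1) / K"
    unfolding D_def using q1 assms(4) c0 K0 by (simp add: powr_powr)
  define \<eta> where "\<eta> = min c D"
  have eta0: "\<eta> > 0" unfolding \<eta>_def using c0 D0 by simp
  have freq: "\<forall>T. \<exists>t\<ge>T. w t < \<epsilon>" if "Liminf at_top (\<lambda>t. ereal (w t)) = 0" "\<epsilon> > 0" for w :: "real \<Rightarrow> real" and \<epsilon>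
  proof (rule ccontr)
    assume "\<not> (\<forall>T. \<exists>t\<ge>T. w t < \<epsilon>)"
    hence "\<forall>\<^sub>F t in at_top. ereal \<epsilon> \<le> ereal (w t)"
      unfolding eventually_at_top_linorder by (auto simp: not_less)
    hence "ereal \<epsilon> \<le> Liminf at_top (\<lambda>t. ereal (w t))" by (rule Liminf_bounded)
    thus False using that by simp
  qed
  have small: "deriv (deriv w1) t + \<tau> * deriv w1 t \<le> 0" if "t \<ge> T0" "w1 t < \<eta>" for t
  proof -
    have "w2 t > c" using T0[OF that(1)] that(2) \<eta>_def by linarith
    hence "\<sigma> * w1 t - \<mu>1 * w1 t powr (2*q+1) - \<beta> * w1 t powr q * w2 t powr (q+1) \<le> 0"
      using key[of q \<mu>1 \<beta> c "w1 t" D "w2 t" K \<sigma>] q0 q1 assms(2,4,8) c0 D0 K0 sK Dp that(2)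
      unfolding \<eta>_def by auto
    thus ?thesis using assms(12) unfolding \<sigma>_def \<tau>_def by (smt (verit))
  qed
  have d1: "\<And>t. (w1 has_real_derivative deriv w1 t) (at t)"
    using assms(10) unfolding C2_real_def by (simp add: DERIV_deriv_iff_real_differentiable)
  have d2: "\<And>t. (deriv w1 has_real_derivative deriv (deriv w1) t) (at t)"
    using assms(10) unfolding C2_real_def by (simp add: DERIV_deriv_iff_real_differentiable)
  have cont: "continuous_on S w1" for S
    using d1 by (meson DERIV_isCont continuous_at_imp_continuous_on)
  define g where "g t = exp (\<tau> * t) * deriv w1 t" for t
  have dg: "(g has_real_derivative exp (\<tau> * t) * (deriv (deriv w1) t + \<tau> * deriv w1 t)) (at t)" for t
  proof -
    have e: "((\<lambda>t. exp (\<tau>*t)) has_real_derivative exp(\<tau>*t)*\<tau>) (at t)"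
      by (auto intro!: derivative_eq_intros)
    show ?thesis unfolding g_def
      by (rule DERIV_cong[OF DERIV_mult[OF e d2]]) (simp add: algebra_simps)
  qed
  show False
  proof (cases "\<forall>\<^sub>F t in at_top. w1 t < \<eta>")
    case True
    then obtain T1 where T1: "\<And>t. t \<ge> T1 \<Longrightarrow> w1 t < \<eta>" unfolding eventually_at_top_linorder by auto
    obtain t where t: "t \<ge> max T0 T1" "w2 t < c" using freq[OF assms(15) c0] by blast
    have "w1 t < \<eta>" using T1 t by auto
    thus False using T0[of t] t \<eta>_def by auto
  next
    case False
    hence big: "\<forall>T. \<exists>t\<ge>T. w1 t \<ge> \<eta>" unfolding eventually_at_top_linorder by (auto simp: not_less)
    obtain a where a: "a \<ge> T0" "w1 a \<ge> \<eta>" using big by blast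
    obtain s where s: "s \<ge> a + 1" "w1 s < \<eta>" using freq[OF assms(14) eta0] by blast
    obtain b where b: "b \<ge> s + 1" "w1 b \<ge> \<eta>" using big by blast
    obtain a' where a': "a \<le> a'" "a' < s" "w1 a' \<ge> \<eta>" "\<forall>t. a' < t \<and> t \<le> s \<longrightarrow> w1 t < \<eta>"
      using last_above[OF cont, of a s \<eta>] a s by auto
    obtain b' where b': "s < b'" "b' \<le> b" "w1 b' \<ge> \<eta>" "\<forall>t. s \<le> t \<and> t < b' \<longrightarrow> w1 t < \<eta>"
      using first_above[OF cont, of s b \<eta>] b s by auto
    obtain u where u: "u > a'" "u < s" "w1 s - w1 a' = (s - a') * deriv w1 u"
      using MVT2[OF a'(2), of w1 "deriv w1"] d1 by blast
    have u1: "deriv w1 u < 0"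
    proof -
      have "(s - a') * deriv w1 u < 0" using u(3) s a'(3) by linarith
      thus ?thesis using a'(2) by (simp add: mult_less_0_iff)
    qed
    obtain v where v: "v > s" "v < b'" "w1 b' - w1 s = (b' - s) * deriv w1 v"
      using MVT2[OF b'(1), of w1 "deriv w1"] d1 by blast
    have v1: "deriv w1 v > 0"
    proof -
      have "(b' - s) * deriv w1 v > 0" using v(3) s b'(3) by linarith
      thus ?thesis using b'(1) by (simp add: zero_less_mult_iff)
    qed
    have uv: "u < v" using u v by linarith
    obtain \<xi> where xi: "\<xi> > u" "\<xi> < v" "g v - g u = (v - u) * (exp (\<tau> * \<xi>) * (deriv (deriv w1) \<xi> + \<tau> * deriv w1 \<xi>))"
      using MVT2[OF uv, of g "\<lambda>t. exp (\<tau> * t) * (deriv (deriv w1) t + \<tau> * deriv w1 t)"] dg by blast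
    have "w1 \<xi> < \<eta>"
    proof (cases "\<xi> \<le> s")
      case True thus ?thesis using a'(4) xi u by auto
    next
      case False thus ?thesis using b'(4) xi v by auto
    qed
    moreover have "\<xi> \<ge> T0" using xi u a a' by linarith
    ultimately have "deriv (deriv w1) \<xi> + \<tau> * deriv w1 \<xi> \<le> 0" using small by blast
    hence "(v - u) * (exp (\<tau> * \<xi>) * (deriv (deriv w1) \<xi> + \<tau> * deriv w1 \<xi>)) \<le> 0"
      using uv by (simp add: mult_nonneg_nonpos)
    moreover have "g v > 0" "g u < 0" unfolding g_def using u1 v1 by (auto simp: mult_pos_neg)
    ultimately show False using xi(3) by linarith
  qed
qed

end
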